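(* Let $r\geq 2$ and $d\geq 2$ be integers, let $\mathbf a=(a_1,\ldots,a_r)$ be a sequence of positive integers, and let $D(d)=\operatorname{lcm}(da_1,\ldots,da_r)$. For an integer $n\geq 0$ let $\mathbf p_{\mathbf a,d}(n)$ denote the number of integer tuples $(x_1,\ldots,x_r)$ with $\sum_{i=1}^r a_ix_i=n$, $x_i\geq 0$ and $x_i\equiv 0$ or $x_i\equiv 1\pmod d$ for all $i$. Then for all $n\geq 0$, $$\mathbf p_{\mathbf a,d}(n)=\frac{1}{(r-1)!}\sum_{\varepsilon\in\{0,1\}^r}\ \sum_{\substack{0\leq j_i\leq \frac{D(d)}{da_i}-1,\ 1\leq i\leq r\\ \sum_{i=1}^r a_i(dj_i+\varepsilon_i)\equiv n \pmod{D(d)}}}\ \prod_{\ell=1}^{r-1}\left(\frac{n-\sum_{i=1}^r a_i(dj_i+\varepsilon_i)}{D(d)}+\ell\right),$$ where $\varepsilon=(\varepsilon_1,\ldots,\varepsilon_r)$. Moreover, the polynomial part of $\mathbf p_{\mathbf a,d}$ is $$P_{\mathbf a,d}(n)=\frac{1}{D(d)(r-1)!}\sum_{\substack{\varepsilon\in\{0,1\}^r\\ 0\leq j_i\leq \frac{D(d)}{da_i}-1,\ 1\leq i\leq r}}\ \prod_{\ell=1}^{r-1}\left(\frac{n-\sum_{i=1}^r a_i(dj_i+\varepsilon_i)}{D(d)}+\ell\right).$$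
   Context: The polynomial part $P_{\mathbf a,d}(n)$ of $\mathbf p_{\mathbf a,d}$ is the polynomial in $n$ given by the coefficient of $t^{-1}$ in the Laurent expansion at $t=0$ of $e^{nt}\prod_{i=1}^r\dfrac{1+e^{-a_it}}{1-e^{-da_it}}$ (equivalently, the sum over $J\subseteq\{1,\ldots,r\}$ of Sylvester's first waves $P_{d\mathbf a}(n-\sum_{i\in J}a_i)$ of the restricted partition function with parts $da_1,\ldots,da_r$). *)

theory Defs
  imports "HOL-Analysis.Analysis" "HOL-Computational_Algebra.Formal_Laurent_Series"
    "HOL-Number_Theory.Cong"
begin

text \<open>The sequence a = (a_1,...,a_r) is represented by a function on indices 0..r-1.\<close>

definition pad :: "nat \<Rightarrow> (nat \<Rightarrow> nat) \<Rightarrow> nat \<Rightarrow> nat \<Rightarrow> nat" where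
  "pad r a d n = card {x \<in> PiE {..<r} (\<lambda>_. UNIV :: nat set).
       (\<Sum>i<r. a i * x i) = n \<and> (\<forall>i<r. x i mod d = 0 \<or> x i mod d = 1)}"

definition Dd :: "nat \<Rightarrow> (nat \<Rightarrow> nat) \<Rightarrow> nat \<Rightarrow> nat" where
  "Dd r a d = Lcm ((\<lambda>i. d * a i) ` {..<r})"

definition polypart :: "nat \<Rightarrow> (nat \<Rightarrow> nat) \<Rightarrow> nat \<Rightarrow> real \<Rightarrow> real" where
  "polypart r a d x = fls_nth
     (fps_to_fls (fps_exp x) *
      (\<Prod>i<r. fps_to_fls (1 + fps_exp (- real (a i))) /
               fps_to_fls (1 - fps_exp (- real (d * a i))))) (-1)"

end

theory Submission
  imports Defs
begin

definition EE :: "real \<Rightarrow> real fls" where "EE c = fps_to_fls (fps_exp c)"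
definition BB :: "real \<Rightarrow> real fls" where "BB D = fps_to_fls (1 - fps_exp (- D))"
definition GG :: "real \<Rightarrow> nat \<Rightarrow> real \<Rightarrow> real" where
  "GG D r c = fls_nth (EE c * inverse (BB D) ^ r) (-1)"

lemma fps_to_fls_cmult: "fps_to_fls (fps_const (c::real) * f) = fls_const c * fps_to_fls f"
  by (simp only: fls_times_fps_to_fls fps_const_to_fls)

lemma EE_add: "EE (a + b) = EE a * EE b"
  unfolding EE_def fps_exp_add_mult by (rule fls_times_fps_to_fls)

lemma EE_deriv: "fls_deriv (EE c) = fls_const c * EE c"
  unfolding EE_def fls_deriv_fps_to_fls fps_exp_deriv fps_to_fls_cmult ..

lemma BB_deriv: "fls_deriv (BB D) = fls_const D * EE (-D)"
proof -
  have "fps_deriv (1 - fps_exp (- D)) = fps_const D * fps_exp (-D)"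
    by (simp del: fps_const_neg add: fps_const_neg[symmetric])
  then show ?thesis unfolding BB_def EE_def fls_deriv_fps_to_fls by (simp only: fps_to_fls_cmult)
qed
lemma EE_nz: "EE c \<noteq> 0"
  by (simp add: EE_def)

lemma EE_sub: "fls_subdegree (EE c) = 0"
  unfolding EE_def fls_subdegree_fls_to_fps by (simp add: subdegree_eq_0)

lemma BB_nth1: "fls_nth (BB D) 1 = D"
  by (simp add: BB_def)

lemma BB_nth0: "fls_nth (BB D) 0 = 0"
  by (simp add: BB_def)

lemma BB_sub: assumes "D \<noteq> 0" shows "fls_subdegree (BB D) = 1" "BB D \<noteq> 0"
proof -
  have nz: "BB D \<noteq> 0" using assms BB_nth1[of D] by auto
  show "BB D \<noteq> 0" by fact
  have "fls_subdegree (BB D) \<le> 1" using assms BB_nth1[of D] by (simp add: fls_subdegree_leI)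
  moreover have "fls_subdegree (BB D) \<ge> 1"
  proof (rule ccontr)
    assume "\<not> ?thesis"
    moreover have "fls_subdegree (BB D) \<ge> 0" unfolding BB_def by (metis fls_subdegree_fls_to_fps_gt0 fps_to_fls_minus fps_one_to_fls)
    ultimately have "fls_subdegree (BB D) = 0" by simp
    then show False using nz BB_nth0[of D] by (metis nth_fls_subdegree_nonzero)
  qed
  ultimately show "fls_subdegree (BB D) = 1" by simp
qed

lemma GG_1: assumes "D \<noteq> 0" shows "GG D 1 c = 1 / D"
proof -
  have s: "fls_subdegree (inverse (BB D)) = -1" using BB_sub[OF assms] by (simp add: fls_inverse_subdegree)
  have "fls_nth (inverse (BB D)) (-1) = 1 / D" using fls_inverse_base[of "BB D"] BB_sub[OF assms] BB_nth1[of D]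
    by (simp add: divide_inverse)
  then show ?thesis using fls_times_base[of "EE c" "inverse (BB D)"] s EE_sub[of c]
    by (simp add: GG_def EE_def)
qed

lemma GG_rec: assumes "D \<noteq> 0" "r \<ge> 1"
  shows "c * GG D r c = real r * D * GG D (Suc r) (c - D)"
proof -
  define W where "W = inverse (BB D)"
  have dW: "fls_deriv W = - (fls_const D * EE (-D)) * W^2"
    by (simp add: W_def fls_inverse_deriv BB_deriv)
  obtain m where m: "r = Suc m" using assms(2) by (cases r) auto
  have dWr: "fls_deriv (W^r) = - (fls_const (real r * D)) * (EE (-D) * W^(Suc r))"
  proof -
    have "fls_deriv (W^r) = fls_const (real r) * W^m * (-(fls_const D * EE (-D)) * W^2)"
      unfolding fls_deriv_power dW m by (simp add: fls_of_nat)
    also have "\<dots> = - (fls_const (real r) * fls_const D) * (EE (-D) * (W^m * W^2))"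
      by (simp only: mult_ac mult_minus_left mult_minus_right)
    also have "W^m * W^2 = W^(Suc r)" by (simp add: m power_add[symmetric])
    finally show ?thesis by simp
  qed
  have "fls_deriv (EE c * W^r) = fls_const c * (EE c * W^r) - fls_const (real r * D) * (EE (c - D) * W^(Suc r))"
    using dWr EE_add[of c "-D"] by (simp add: EE_deriv algebra_simps)
  then have "0 = c * GG D r c - real r * D * GG D (Suc r) (c - D)"
    using fls_deriv_residue[of "EE c * W^r"] by (simp add: GG_def W_def)
  then show ?thesis by simp
qed


lemma prod_shift1: "(\<Prod>l=1..Suc m. f l) = (f 1::real) * (\<Prod>l=1..m. f (Suc l))"
proof -
  have "(\<Prod>l=1..Suc m. f l) = f 1 * (\<Prod>l=Suc 1..Suc m. f l)"
    by (rule prod.atLeast_Suc_atMost) simp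
  also have "(\<Prod>l=Suc 1..Suc m. f l) = (\<Prod>l=1..m. f (Suc l))"
    by (rule prod.shift_bounds_cl_Suc_ivl)
  finally show ?thesis .
qed

lemma GG_closed: assumes "D \<noteq> 0"
  shows "GG D (Suc m) c = (\<Prod>l=1..m. c / D + real l) / (D * fact m)"
proof (induction m arbitrary: c)
  case 0
  then show ?case using GG_1[OF assms] by simp
next
  case (Suc m)
  have "(c + D) * GG D (Suc m) (c + D) = real (Suc m) * D * GG D (Suc (Suc m)) c"
    using GG_rec[OF assms, of "Suc m" "c + D"] by simp
  have e: "GG D (Suc (Suc m)) c = (c + D) * GG D (Suc m) (c + D) / (real (Suc m) * D)"
  proof -
    have k: "real (Suc m) * D \<noteq> 0" using assms by simp
    show ?thesis using k \<open>(c + D) * GG D (Suc m) (c + D) = real (Suc m) * D * GG D (Suc (Suc m)) c\<close>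
      by (simp add: eq_divide_eq mult.commute)
  qed
  have cd: "(c + D) / D = c / D + 1" using assms by (simp add: field_simps)
  have p: "(\<Prod>l=1..Suc m. c / D + real l) = (c / D + 1) * (\<Prod>l=1..m. (c + D) / D + real l)"
    unfolding prod_shift1 cd by (simp add: algebra_simps)
  show ?case unfolding e Suc p cd using assms
    by (simp add: field_simps)
qed

lemma EE_power: "EE c ^ n = EE (real n * c)"
  unfolding EE_def fps_to_fls_power[symmetric] fps_exp_power_mult by simp

lemma EE_0: "EE 0 = 1" by (simp add: EE_def)

lemma sum01: "(\<Sum>e\<in>{0,1::nat}. g e) = g 0 + (g 1 :: 'a::comm_monoid_add)"
  by simp

lemma factor_eq:
  assumes "d * a * M = D" "D > 0"
  shows "fps_to_fls (1 + fps_exp (- real a)) / fps_to_fls (1 - fps_exp (- real (d * a)))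
       = (\<Sum>e\<in>{0,1::nat}. \<Sum>j\<in>{0..<M}. EE (- real (a * (d * j + e)))) * inverse (BB (real D))"
proof -
  define q where "q = EE (- real (d * a))"
  define S where "S = (\<Sum>j<M. q ^ j)"
  define X where "X = 1 + EE (- real a)"
  have Y: "fps_to_fls (1 - fps_exp (- real (d * a))) = 1 - q" by (simp add: q_def EE_def)
  have Xd: "fps_to_fls (1 + fps_exp (- real a)) = X" by (simp add: X_def EE_def)
  have qM: "q ^ M = EE (- real D)" unfolding q_def EE_power using assms(1)
    by (simp flip: assms(1) add: mult_ac)
  have B: "BB (real D) = (1 - q) * S"
    unfolding S_def one_diff_power_eq[symmetric] qM by (simp add: BB_def EE_def)
  have Bnz: "BB (real D) \<noteq> 0" using BB_sub[of "real D"] assms by simp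
  then have Snz: "S \<noteq> 0" using B by auto
  have "X / (1 - q) = (X * S) / ((1 - q) * S)" using Snz by simp
  also have "\<dots> = (X * S) * inverse (BB (real D))" by (simp add: B divide_inverse)
  also have "X * S = (\<Sum>e\<in>{0,1::nat}. \<Sum>j\<in>{0..<M}. EE (- real (a * (d * j + e))))"
  proof -
    have 1: "q ^ j = EE (- real (a * (d * j + 0)))" for j
      unfolding q_def EE_power by (simp add: algebra_simps)
    have 2: "EE (- real a) * q ^ j = EE (- real (a * (d * j + 1)))" for j
      unfolding q_def EE_power EE_add[symmetric] by (simp add: algebra_simps)
    have "X * S = (\<Sum>j<M. q ^ j) + (\<Sum>j<M. EE (- real a) * q ^ j)"
      unfolding X_def S_def by (simp add: distrib_right sum_distrib_left sum.distrib)
    also have "\<dots> = (\<Sum>j\<in>{0..<M}. EE (- real (a * (d * j + 0)))) + (\<Sum>j\<in>{0..<M}. EE (- real (a * (d * j + 1))))"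
      unfolding 2[symmetric] 1[symmetric] atLeast0LessThan ..
    finally show ?thesis by (simp only: sum01)

  qed
  finally show ?thesis unfolding Y Xd .
qed

lemma EE_sum: "finite A \<Longrightarrow> (\<Prod>i\<in>A. EE (f i)) = EE (\<Sum>i\<in>A. f i)"
  by (induction rule: finite_induct) (simp_all add: EE_0 EE_add)

lemma polypart_eq:
  assumes D: "Dd r a d > 0" and dv: "\<And>i. i < r \<Longrightarrow> d * a i * (Dd r a d div (d * a i)) = Dd r a d"
  shows "polypart r a d x = (\<Sum>\<epsilon>\<in>PiE {..<r} (\<lambda>_. {0,1::nat}).
     \<Sum>j\<in>PiE {..<r} (\<lambda>i. {0..<Dd r a d div (d * a i)}).
        GG (real (Dd r a d)) r (x - real (\<Sum>i<r. a i * (d * j i + \<epsilon> i))))"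
proof -
  define D where "D = Dd r a d"
  define M where "M i = D div (d * a i)" for i
  define W where "W = inverse (BB (real D))"
  have "(\<Prod>i<r. fps_to_fls (1 + fps_exp (- real (a i))) / fps_to_fls (1 - fps_exp (- real (d * a i))))
      = (\<Prod>i<r. (\<Sum>e\<in>{0,1::nat}. \<Sum>j\<in>{0..<M i}. EE (- real (a i * (d * j + e)))) * W)"
    by (rule prod.cong[OF refl], unfold W_def M_def, rule factor_eq) (use dv D in \<open>auto simp: D_def\<close>)
  also have "\<dots> = (\<Prod>i<r. \<Sum>e\<in>{0,1::nat}. \<Sum>j\<in>{0..<M i}. EE (- real (a i * (d * j + e)))) * W ^ r"
    by (simp add: prod.distrib)
  also have "(\<Prod>i<r. \<Sum>e\<in>{0,1::nat}. \<Sum>j\<in>{0..<M i}. EE (- real (a i * (d * j + e))))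
     = (\<Sum>\<epsilon>\<in>PiE {..<r} (\<lambda>_. {0,1::nat}). \<Prod>i<r. \<Sum>j\<in>{0..<M i}. EE (- real (a i * (d * j + \<epsilon> i))))"
    by (rule prod_sum_PiE) auto
  also have "\<dots> = (\<Sum>\<epsilon>\<in>PiE {..<r} (\<lambda>_. {0,1::nat}). \<Sum>J\<in>PiE {..<r} (\<lambda>i. {0..<M i}).
       \<Prod>i<r. EE (- real (a i * (d * J i + \<epsilon> i))))"
    by (intro sum.cong refl prod_sum_PiE) auto
  also have "\<dots> = (\<Sum>\<epsilon>\<in>PiE {..<r} (\<lambda>_. {0,1::nat}). \<Sum>J\<in>PiE {..<r} (\<lambda>i. {0..<M i}).
       EE (- real (\<Sum>i<r. a i * (d * J i + \<epsilon> i))))"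
    by (intro sum.cong refl) (simp add: EE_sum sum_negf)
  finally have P: "(\<Prod>i<r. fps_to_fls (1 + fps_exp (- real (a i))) / fps_to_fls (1 - fps_exp (- real (d * a i))))
     = (\<Sum>\<epsilon>\<in>PiE {..<r} (\<lambda>_. {0,1::nat}). \<Sum>J\<in>PiE {..<r} (\<lambda>i. {0..<M i}).
       EE (- real (\<Sum>i<r. a i * (d * J i + \<epsilon> i)))) * W ^ r" .
  have "polypart r a d x = fls_nth (EE x * ((\<Sum>\<epsilon>\<in>PiE {..<r} (\<lambda>_. {0,1::nat}). \<Sum>J\<in>PiE {..<r} (\<lambda>i. {0..<M i}).
       EE (- real (\<Sum>i<r. a i * (d * J i + \<epsilon> i)))) * W ^ r)) (-1)"
    unfolding polypart_def P by (simp add: EE_def)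
  also have "\<dots> = fls_nth (\<Sum>\<epsilon>\<in>PiE {..<r} (\<lambda>_. {0,1::nat}). \<Sum>J\<in>PiE {..<r} (\<lambda>i. {0..<M i}).
       EE (x - real (\<Sum>i<r. a i * (d * J i + \<epsilon> i))) * W ^ r) (-1)"
    unfolding sum_distrib_right sum_distrib_left
    by (intro arg_cong[where f="\<lambda>F. fls_nth F (-1)"] sum.cong refl)
       (simp add: mult.assoc[symmetric] EE_add[symmetric])
  also have "\<dots> = (\<Sum>\<epsilon>\<in>PiE {..<r} (\<lambda>_. {0,1::nat}). \<Sum>J\<in>PiE {..<r} (\<lambda>i. {0..<M i}).
       GG (real D) r (x - real (\<Sum>i<r. a i * (d * J i + \<epsilon> i))))"
    by (simp add: fls_nth_sum GG_def W_def)
  finally show ?thesis unfolding D_def M_def .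
qed


lemma card_sum_eq:
  assumes "r \<ge> 1"
  shows "card {q \<in> PiE {..<r} (\<lambda>_. UNIV::nat set). (\<Sum>i<r. q i) = m} = (m + r - 1) choose m"
proof -
  let ?A = "{q \<in> PiE {..<r} (\<lambda>_. UNIV::nat set). (\<Sum>i<r. q i) = m}"
  let ?B = "{l::nat list. length l = r \<and> sum_list l = m}"
  have sl: "sum_list (map q [0..<r]) = (\<Sum>i<r. q i)" for q :: "nat \<Rightarrow> nat"
    by (simp add: sum_list_distinct_conv_sum_set atLeast0LessThan)
  have "bij_betw (\<lambda>q. map q [0..<r]) ?A ?B"
  proof (rule bij_betw_byWitness[where f'="\<lambda>l. restrict (\<lambda>i. l ! i) {..<r}"])
    show "\<forall>q\<in>?A. restrict (\<lambda>i. map q [0..<r] ! i) {..<r} = q"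
    proof
      fix q assume q: "q \<in> ?A"
      show "restrict (\<lambda>i. map q [0..<r] ! i) {..<r} = q"
      proof
        fix i show "restrict (\<lambda>i. map q [0..<r] ! i) {..<r} i = q i"
          using q by (cases "i < r") (auto simp: PiE_def extensional_def)
      qed
    qed
    show "\<forall>l\<in>?B. map (restrict (\<lambda>i. l ! i) {..<r}) [0..<r] = l"
      by (auto intro!: nth_equalityI)
    show "(\<lambda>q. map q [0..<r]) ` ?A \<subseteq> ?B" using sl by auto
    show "(\<lambda>l. restrict (\<lambda>i. l ! i) {..<r}) ` ?B \<subseteq> ?A"
    proof
      fix q assume "q \<in> (\<lambda>l. restrict (\<lambda>i. l ! i) {..<r}) ` ?B"
      then obtain l where l: "l \<in> ?B" and q: "q = restrict (\<lambda>i. l ! i) {..<r}" by auto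
      have "map q [0..<r] = l" using l q by (auto intro!: nth_equalityI)
      then have "(\<Sum>i<r. q i) = m" using sl[of q] l by simp
      then show "q \<in> ?A" using q by auto
    qed
  qed
  then have "card ?A = card ?B" by (rule bij_betw_same_card)
  also have "\<dots> = (m + r - 1) choose m" by (rule card_length_sum_list)
  finally show ?thesis .
qed

lemma prod_poch: "(\<Prod>l=1..k. c + real l) = pochhammer (c + 1) k"
  by (induction k) (simp_all add: pochhammer_Suc algebra_simps)

lemma choose_real:
  assumes "r \<ge> 1"
  shows "real ((m + r - 1) choose m) = (\<Prod>l=1..r-1. real m + real l) / fact (r - 1)"
proof -
  have "(m + r - 1) choose m = (m + r - 1) choose (r - 1)"
    using assms by (subst binomial_symmetric) auto
  then have "real ((m + r - 1) choose m) = real (m + r - 1) gchoose (r - 1)"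
    by (simp add: binomial_gbinomial)
  also have "\<dots> = pochhammer (real m + 1) (r - 1) / fact (r - 1)"
    using assms by (simp add: gbinomial_pochhammer' of_nat_diff)
  finally show ?thesis by (simp only: prod_poch)
qed


lemma decomp_i:
  fixes d M q j e :: nat
  assumes "e < d" "j < M"
  shows "(d * (M * q + j) + e) mod d = e" "(d * (M * q + j) + e) div d mod M = j"
        "(d * (M * q + j) + e) div d div M = q"
proof -
  have 1: "(d * (M * q + j) + e) div d = M * q + j" using assms by simp
  show "(d * (M * q + j) + e) mod d = e" using assms by simp
  show "(d * (M * q + j) + e) div d mod M = j" unfolding 1 using assms by simp
  show "(d * (M * q + j) + e) div d div M = q" unfolding 1 using assms by simp
qed

lemma recomp_i:
  fixes x d M :: nat
  shows "d * (M * (x div d div M) + x div d mod M) + x mod d = x"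
  by simp

lemma sum_recomp:
  fixes D d :: nat and M :: "nat \<Rightarrow> nat"
  assumes DM: "\<And>i. i < r \<Longrightarrow> d * a i * M i = D"
  shows "(\<Sum>i<r. a i * (d * (M i * q i + j i) + e i)) = D * (\<Sum>i<r. q i) + (\<Sum>i<r. a i * (d * j i + e i))"
proof -
  have "(\<Sum>i<r. a i * (d * (M i * q i + j i) + e i)) = (\<Sum>i<r. D * q i + a i * (d * j i + e i))"
  proof (rule sum.cong[OF refl])
    fix i assume "i \<in> {..<r}"
    then have "d * a i * M i = D" using DM by simp
    then show "a i * (d * (M i * q i + j i) + e i) = D * q i + a i * (d * j i + e i)"
      by (simp add: algebra_simps)
  qed
  also have "\<dots> = D * (\<Sum>i<r. q i) + (\<Sum>i<r. a i * (d * j i + e i))"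
    by (simp add: sum.distrib sum_distrib_left)
  finally show ?thesis .
qed

lemma pad_decomp:
  fixes D :: nat and M :: "nat \<Rightarrow> nat"
  assumes d: "d \<ge> 2" and DM: "\<And>i. i < r \<Longrightarrow> d * a i * M i = D" and Dpos: "D > 0"
  shows "pad r a d n = (\<Sum>\<epsilon>\<in>PiE {..<r} (\<lambda>_. {0,1::nat}). \<Sum>j\<in>PiE {..<r} (\<lambda>i. {0..<M i}).
     card {q \<in> PiE {..<r} (\<lambda>_. UNIV::nat set). D * (\<Sum>i<r. q i) + (\<Sum>i<r. a i * (d * j i + \<epsilon> i)) = n})"
proof -
  define E where "E = PiE {..<r} (\<lambda>_. {0,1::nat})"
  define J where "J = PiE {..<r} (\<lambda>i. {0..<M i})"
  define Q where "Q \<epsilon> j = {q \<in> PiE {..<r} (\<lambda>_. UNIV::nat set). D * (\<Sum>i<r. q i) + (\<Sum>i<r. a i * (d * j i + \<epsilon> i)) = n}" for \<epsilon> j :: "nat \<Rightarrow> nat"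
  define S where "S = {x \<in> PiE {..<r} (\<lambda>_. UNIV :: nat set).
       (\<Sum>i<r. a i * x i) = n \<and> (\<forall>i<r. x i mod d = 0 \<or> x i mod d = 1)}"
  define T where "T = Sigma E (\<lambda>\<epsilon>. Sigma J (\<lambda>j. Q \<epsilon> j))"
  have Mpos: "M i > 0" if "i < r" for i using DM[OF that] Dpos by (cases "M i") auto
  have finE: "finite E" unfolding E_def by (rule finite_PiE) auto
  have finJ: "finite J" unfolding J_def by (rule finite_PiE) auto
  have finQ: "finite (Q \<epsilon> j)" for \<epsilon> j
  proof (rule finite_subset)
    show "Q \<epsilon> j \<subseteq> PiE {..<r} (\<lambda>_. {..n})"
    proof
      fix q assume q: "q \<in> Q \<epsilon> j"
      have "q i \<le> n" if "i < r" for i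
      proof -
        have "q i \<le> (\<Sum>i<r. q i)" using that by (intro member_le_sum) auto
        also have "\<dots> \<le> D * (\<Sum>i<r. q i)" using Dpos by simp
        also have "\<dots> \<le> n" using q unfolding Q_def by auto
        finally show ?thesis .
      qed
      then show "q \<in> PiE {..<r} (\<lambda>_. {..n})" using q unfolding Q_def by (auto simp: PiE_def Pi_def)
    qed
    show "finite (PiE {..<r} (\<lambda>_. {..n}))" by (rule finite_PiE) auto
  qed
  define f where "f = (\<lambda>(\<epsilon>::nat\<Rightarrow>nat, j::nat\<Rightarrow>nat, q::nat\<Rightarrow>nat). restrict (\<lambda>i. d * (M i * q i + j i) + \<epsilon> i) {..<r})"
  define g where "g = (\<lambda>x::nat\<Rightarrow>nat. (restrict (\<lambda>i. x i mod d) {..<r}, restrict (\<lambda>i. x i div d mod M i) {..<r},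
        restrict (\<lambda>i. x i div d div M i) {..<r}))"
  have "bij_betw f T S"
  proof (rule bij_betw_byWitness[where f'=g])
    show "\<forall>t\<in>T. g (f t) = t"
    proof
      fix t assume "t \<in> T"
      then obtain \<epsilon> j q where t: "t = (\<epsilon>, j, q)" and e: "\<epsilon> \<in> E" and j: "j \<in> J" and q: "q \<in> Q \<epsilon> j"
        unfolding T_def by auto
      have el: "\<epsilon> i < d" "j i < M i" if "i < r" for i
        using e j that d unfolding E_def J_def by (auto simp: PiE_def Pi_def)
      have dc: "(d * (M i * q i + j i) + \<epsilon> i) mod d = \<epsilon> i"
         "(d * (M i * q i + j i) + \<epsilon> i) div d mod M i = j i"
         "(d * (M i * q i + j i) + \<epsilon> i) div d div M i = q i" "\<epsilon> i mod d = \<epsilon> i" if "i < r" for i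
        using decomp_i[OF el[OF that]] el[OF that] by auto
      have "restrict (\<lambda>i. f t i mod d) {..<r} = \<epsilon>"
        using e unfolding t f_def E_def by (auto simp: PiE_def extensional_def fun_eq_iff dc)
      moreover have "restrict (\<lambda>i. f t i div d mod M i) {..<r} = j"
        using j unfolding t f_def J_def by (auto simp: PiE_def extensional_def fun_eq_iff dc)
      moreover have "restrict (\<lambda>i. f t i div d div M i) {..<r} = q"
        using q unfolding t f_def Q_def by (auto simp: PiE_def extensional_def fun_eq_iff dc)
      ultimately show "g (f t) = t" unfolding g_def t by simp
    qed
    show "\<forall>x\<in>S. f (g x) = x"
    proof
      fix x assume "x \<in> S"
      then have "x \<in> extensional {..<r}" unfolding S_def by (auto simp: PiE_def)
      then show "f (g x) = x" unfolding f_def g_def by (auto simp: extensional_def fun_eq_iff)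
    qed
    show "f ` T \<subseteq> S"
    proof
      fix x assume "x \<in> f ` T"
      then obtain \<epsilon> j q where x: "x = f (\<epsilon>, j, q)" and e: "\<epsilon> \<in> E" and j: "j \<in> J" and q: "q \<in> Q \<epsilon> j"
        unfolding T_def by auto
      have el: "\<epsilon> i < d" "\<epsilon> i \<le> 1" "j i < M i" if "i < r" for i
        using e j that d unfolding E_def J_def by (auto simp: PiE_def Pi_def)
      have "(\<Sum>i<r. a i * x i) = (\<Sum>i<r. a i * (d * (M i * q i + j i) + \<epsilon> i))"
        unfolding x f_def by (intro sum.cong refl) simp
      also have "\<dots> = n"
      proof -
        have qq: "D * (\<Sum>i<r. q i) + (\<Sum>i<r. a i * (d * j i + \<epsilon> i)) = n" using q unfolding Q_def by blast
        show ?thesis using sum_recomp[OF DM, where q=q and j=j and e=\<epsilon>] qq by (rule trans)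
      qed
      finally have "(\<Sum>i<r. a i * x i) = n" .
      moreover have "x i mod d = 0 \<or> x i mod d = 1" if "i < r" for i
      proof -
        have "x i = d * (M i * q i + j i) + \<epsilon> i" using that unfolding x f_def by simp
        then have "x i mod d = \<epsilon> i" using decomp_i(1)[OF el(1)[OF that] el(3)[OF that]] by simp
        then show ?thesis using el(2)[OF that] by auto
      qed
      moreover have "x \<in> PiE {..<r} (\<lambda>_. UNIV :: nat set)" unfolding x f_def by simp
      ultimately show "x \<in> S" unfolding S_def by blast
    qed
    show "g ` S \<subseteq> T"
    proof
      fix y assume "y \<in> g ` S"
      then obtain x where y: "y = g x" and x: "x \<in> S" by auto
      have xm: "x i mod d = 0 \<or> x i mod d = 1" if "i < r" for i using x that unfolding S_def by auto
      have "restrict (\<lambda>i. x i mod d) {..<r} \<in> E" unfolding E_def using xm by auto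
      moreover have "restrict (\<lambda>i. x i div d mod M i) {..<r} \<in> J" unfolding J_def using Mpos by auto
      moreover have "restrict (\<lambda>i. x i div d div M i) {..<r} \<in> Q (restrict (\<lambda>i. x i mod d) {..<r}) (restrict (\<lambda>i. x i div d mod M i) {..<r})"
      proof -
        have "n = (\<Sum>i<r. a i * x i)" using x unfolding S_def by auto
        also have "\<dots> = (\<Sum>i<r. a i * (d * (M i * (x i div d div M i) + x i div d mod M i) + x i mod d))"
          by (simp only: recomp_i)
        also have "\<dots> = D * (\<Sum>i<r. x i div d div M i) + (\<Sum>i<r. a i * (d * (x i div d mod M i) + x i mod d))"
          by (rule sum_recomp[OF DM])
        finally show ?thesis unfolding Q_def by auto
      qed
      ultimately show "y \<in> T" unfolding T_def y g_def by auto
    qed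
  qed
  then have "card S = card T" by (simp add: bij_betw_same_card)
  also have "card T = (\<Sum>\<epsilon>\<in>E. card (Sigma J (\<lambda>j. Q \<epsilon> j)))"
    unfolding T_def using finE finJ finQ by (intro card_SigmaI) auto
  also have "\<dots> = (\<Sum>\<epsilon>\<in>E. \<Sum>j\<in>J. card (Q \<epsilon> j))"
    using finJ finQ by (intro sum.cong refl card_SigmaI) auto
  finally show ?thesis unfolding pad_def S_def E_def J_def Q_def .
qed


lemma s_bound:
  fixes D d :: nat and M :: "nat \<Rightarrow> nat"
  assumes d: "d \<ge> 2" and r: "r \<ge> 1" and DM: "\<And>i. i < r \<Longrightarrow> d * a i * M i = D"
    and apos: "\<And>i. i < r \<Longrightarrow> a i > 0"
    and e: "\<epsilon> \<in> PiE {..<r} (\<lambda>_. {0,1::nat})" and j: "j \<in> PiE {..<r} (\<lambda>i. {0..<M i})"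
  shows "(\<Sum>i<r. a i * (d * j i + \<epsilon> i)) < r * D"
proof -
  have "(\<Sum>i<r. a i * (d * j i + \<epsilon> i)) < (\<Sum>i<r. D)"
  proof (rule sum_strict_mono)
    show "finite {..<r}" by simp
    have "0 \<in> {..<r}" using r by simp
    then show "{..<r} \<noteq> {}" by blast
    fix i assume i: "i \<in> {..<r}"
    have ei: "\<epsilon> i \<le> 1" and ji: "j i < M i" using e j i by (auto simp: PiE_def Pi_def)
    have "d * j i + \<epsilon> i < d * (j i + 1)" using ei d by simp
    also have "\<dots> \<le> d * M i" using ji by (intro mult_le_mono2) simp
    finally have lt: "d * j i + \<epsilon> i < d * M i" .
    have "a i * (d * j i + \<epsilon> i) < a i * (d * M i)" using lt apos i by simp
    also have "\<dots> = D" using DM[of i] i by (simp add: mult_ac)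
    finally show "a i * (d * j i + \<epsilon> i) < D" .
  qed
  then show ?thesis by simp
qed

lemma term_card:
  fixes D d :: nat and M :: "nat \<Rightarrow> nat"
  assumes d: "d \<ge> 2" and r: "r \<ge> 1" and DM: "\<And>i. i < r \<Longrightarrow> d * a i * M i = D"
    and Dpos: "D > 0" and apos: "\<And>i. i < r \<Longrightarrow> a i > 0"
    and e: "\<epsilon> \<in> PiE {..<r} (\<lambda>_. {0,1::nat})" and j: "j \<in> PiE {..<r} (\<lambda>i. {0..<M i})"
  shows "real (card {q \<in> PiE {..<r} (\<lambda>_. UNIV::nat set). D * (\<Sum>i<r. q i) + (\<Sum>i<r. a i * (d * j i + \<epsilon> i)) = n})
    = (if [(\<Sum>i<r. a i * (d * j i + \<epsilon> i)) = n] (mod D)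
       then (\<Prod>l=1..r-1. (real n - real (\<Sum>i<r. a i * (d * j i + \<epsilon> i))) / real D + real l) / fact (r - 1) else 0)"
proof -
  define s where "s = (\<Sum>i<r. a i * (d * j i + \<epsilon> i))"
  define Q where "Q = {q \<in> PiE {..<r} (\<lambda>_. UNIV::nat set). D * (\<Sum>i<r. q i) + s = n}"
  have sb: "s < r * D" unfolding s_def by (rule s_bound[OF d r DM apos e j])
  have main: "real (card Q) = (if [s = n] (mod D)
       then (\<Prod>l=1..r-1. (real n - real s) / real D + real l) / fact (r - 1) else 0)"
  proof (cases "s \<le> n \<and> D dvd (n - s)")
    case True
    then obtain m where m: "n - s = D * m" by auto
    have neq: "n = s + D * m" using True m by simp
    have iff: "D * x + s = n \<longleftrightarrow> x = m" for x
    proof -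
      have "D * x + s = n \<longleftrightarrow> D * x = D * m" using neq by simp
      also have "\<dots> \<longleftrightarrow> x = m" using Dpos by simp
      finally show ?thesis .
    qed
    have Qe: "Q = {q \<in> PiE {..<r} (\<lambda>_. UNIV::nat set). (\<Sum>i<r. q i) = m}"
      unfolding Q_def iff ..
    have "n mod D = s mod D" using mod_eq_dvd_iff_nat[of s n D] True by blast
    then have cg: "[s = n] (mod D)" unfolding cong_def by simp
    have rl: "(real n - real s) / real D = real m"
    proof -
      have "real n - real s = real D * real m" unfolding neq by simp
      then show ?thesis using Dpos by simp
    qed
    have "real (card Q) = (\<Prod>l=1..r-1. real m + real l) / fact (r - 1)"
      unfolding Qe card_sum_eq[OF r] choose_real[OF r] ..
    then show ?thesis unfolding rl using cg by simp
  next
    case False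
    have Q0: "Q = {}"
    proof (rule ccontr)
      assume "Q \<noteq> {}"
      then obtain q where "q \<in> Q" by auto
      then have qe: "D * (\<Sum>i<r. q i) + s = n" unfolding Q_def by blast
      then have "n - s = D * (\<Sum>i<r. q i)" by simp
      then have "s \<le> n \<and> D dvd (n - s)" using qe by (metis dvd_triv_left le_add2)
      then show False using False by blast
    qed
    have "(if [s = n] (mod D) then (\<Prod>l=1..r-1. (real n - real s) / real D + real l) / fact (r - 1) else 0) = 0"
    proof (cases "[s = n] (mod D)")
      case True
      then have smod: "s mod D = n mod D" unfolding cong_def .
      have sn: "n < s"
      proof (rule ccontr)
        assume "\<not> n < s"
        then have "s \<le> n" by simp
        then have "D dvd n - s" using mod_eq_dvd_iff_nat[of s n D] smod by simp
        then show False using False \<open>s \<le> n\<close> by blast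
      qed
      have "D dvd s - n" using mod_eq_dvd_iff_nat[of n s D] smod sn by simp
      then obtain k where k: "s - n = D * k" by auto
      have seq: "s = n + D * k" using k sn by simp
      have k1: "k \<ge> 1" using seq sn by (cases k) auto
      have "D * k \<le> s" using seq by simp
      also have "s < r * D" by (rule sb)
      finally have "D * k < D * r" by (simp add: mult.commute)
      then have "k < r" using Dpos by simp
      then have kr: "k \<le> r - 1" by simp
      have "(real n - real s) / real D = - real k"
      proof -
        have "real s - real n = real D * real k" unfolding seq by simp
        then show ?thesis using Dpos by (simp add: field_simps)
      qed
      then have fk: "(real n - real s) / real D + real k = 0" by simp
      have "(\<Prod>l=1..r-1. (real n - real s) / real D + real l) = 0"
        apply (rule prod_zero)
         apply simp
        apply (rule bexI[of _ k])
        using fk k1 kr by auto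
      then show ?thesis by simp
    qed simp
    then show ?thesis unfolding Q0 by simp
  qed
  show ?thesis using main unfolding Q_def s_def .
qed


theorem theorem2p3:
  fixes r d :: nat and a :: "nat \<Rightarrow> nat"
  assumes "r \<ge> 2" and "d \<ge> 2" and "\<And>i. i < r \<Longrightarrow> a i > 0"
  shows "(\<forall>n::nat. real (pad r a d n) =
           1 / fact (r - 1) *
           (\<Sum>\<epsilon>\<in>PiE {..<r} (\<lambda>_. {0, 1::nat}).
             \<Sum>j\<in>{j \<in> PiE {..<r} (\<lambda>i. {0..<Dd r a d div (d * a i)}).
                    [(\<Sum>i<r. a i * (d * j i + \<epsilon> i)) = n] (mod Dd r a d)}.
               \<Prod>l=1..r-1. (real n - real (\<Sum>i<r. a i * (d * j i + \<epsilon> i))) / real (Dd r a d)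
                             + real l))
       \<and> (\<forall>x::real. polypart r a d x =
           1 / (real (Dd r a d) * fact (r - 1)) *
           (\<Sum>\<epsilon>\<in>PiE {..<r} (\<lambda>_. {0, 1::nat}).
             \<Sum>j\<in>PiE {..<r} (\<lambda>i. {0..<Dd r a d div (d * a i)}).
               \<Prod>l=1..r-1. (x - real (\<Sum>i<r. a i * (d * j i + \<epsilon> i))) / real (Dd r a d)
                             + real l))"
proof -
  have r1: "r \<ge> 1" using assms(1) by simp
  have dpos: "d > 0" using assms(2) by simp
  have fin: "finite ((\<lambda>i. d * a i) ` {..<r})" by simp
  have Dpos: "Dd r a d > 0"
  proof -
    have "0 \<notin> (\<lambda>i. d * a i) ` {..<r}" using assms(3) dpos by fastforce
    then have "Dd r a d \<noteq> 0" unfolding Dd_def using Lcm_0_iff[OF fin] by blast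
    then show ?thesis by simp
  qed
  have dvd: "d * a i dvd Dd r a d" if "i < r" for i
    unfolding Dd_def using that by (intro dvd_Lcm) auto
  have DM: "d * a i * (Dd r a d div (d * a i)) = Dd r a d" if "i < r" for i
    using dvd[OF that] by simp
  have P1: "real (pad r a d n) =
           1 / fact (r - 1) *
           (\<Sum>\<epsilon>\<in>PiE {..<r} (\<lambda>_. {0, 1::nat}).
             \<Sum>j\<in>{j \<in> PiE {..<r} (\<lambda>i. {0..<Dd r a d div (d * a i)}).
                    [(\<Sum>i<r. a i * (d * j i + \<epsilon> i)) = n] (mod Dd r a d)}.
               \<Prod>l=1..r-1. (real n - real (\<Sum>i<r. a i * (d * j i + \<epsilon> i))) / real (Dd r a d)
                             + real l)" for n
  proof -
    have "real (pad r a d n) = (\<Sum>\<epsilon>\<in>PiE {..<r} (\<lambda>_. {0, 1::nat}).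
        \<Sum>j\<in>PiE {..<r} (\<lambda>i. {0..<Dd r a d div (d * a i)}).
        real (card {q \<in> PiE {..<r} (\<lambda>_. UNIV::nat set). Dd r a d * (\<Sum>i<r. q i) + (\<Sum>i<r. a i * (d * j i + \<epsilon> i)) = n}))"
    proof -
      have "pad r a d n = (\<Sum>\<epsilon>\<in>PiE {..<r} (\<lambda>_. {0, 1::nat}).
        \<Sum>j\<in>PiE {..<r} (\<lambda>i. {0..<Dd r a d div (d * a i)}).
        card {q \<in> PiE {..<r} (\<lambda>_. UNIV::nat set). Dd r a d * (\<Sum>i<r. q i) + (\<Sum>i<r. a i * (d * j i + \<epsilon> i)) = n})"
        by (rule pad_decomp[OF assms(2) DM Dpos])
      then show ?thesis by simp
    qed
    also have "\<dots> = (\<Sum>\<epsilon>\<in>PiE {..<r} (\<lambda>_. {0, 1::nat}).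
        \<Sum>j\<in>PiE {..<r} (\<lambda>i. {0..<Dd r a d div (d * a i)}).
        (if [(\<Sum>i<r. a i * (d * j i + \<epsilon> i)) = n] (mod Dd r a d)
       then (\<Prod>l=1..r-1. (real n - real (\<Sum>i<r. a i * (d * j i + \<epsilon> i))) / real (Dd r a d) + real l) / fact (r - 1) else 0))"
      by (intro sum.cong refl term_card[OF assms(2) r1 DM Dpos assms(3)]) auto
    also have "\<dots> = (\<Sum>\<epsilon>\<in>PiE {..<r} (\<lambda>_. {0, 1::nat}).
        \<Sum>j\<in>{j \<in> PiE {..<r} (\<lambda>i. {0..<Dd r a d div (d * a i)}).
                    [(\<Sum>i<r. a i * (d * j i + \<epsilon> i)) = n] (mod Dd r a d)}.
       (\<Prod>l=1..r-1. (real n - real (\<Sum>i<r. a i * (d * j i + \<epsilon> i))) / real (Dd r a d) + real l) / fact (r - 1))"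
      apply (rule sum.cong[OF refl])
      apply (rule sum.inter_filter[symmetric])
      by (auto intro!: finite_PiE)
    also have "\<dots> = 1 / fact (r - 1) *
           (\<Sum>\<epsilon>\<in>PiE {..<r} (\<lambda>_. {0, 1::nat}).
             \<Sum>j\<in>{j \<in> PiE {..<r} (\<lambda>i. {0..<Dd r a d div (d * a i)}).
                    [(\<Sum>i<r. a i * (d * j i + \<epsilon> i)) = n] (mod Dd r a d)}.
               \<Prod>l=1..r-1. (real n - real (\<Sum>i<r. a i * (d * j i + \<epsilon> i))) / real (Dd r a d)
                             + real l)"
      by (simp add: sum_divide_distrib)
    finally show ?thesis .
  qed
  have P2: "polypart r a d x =
           1 / (real (Dd r a d) * fact (r - 1)) *
           (\<Sum>\<epsilon>\<in>PiE {..<r} (\<lambda>_. {0, 1::nat}).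
             \<Sum>j\<in>PiE {..<r} (\<lambda>i. {0..<Dd r a d div (d * a i)}).
               \<Prod>l=1..r-1. (x - real (\<Sum>i<r. a i * (d * j i + \<epsilon> i))) / real (Dd r a d)
                             + real l)" for x
  proof -
    have rS: "r = Suc (r - 1)" using r1 by simp
    have Dn: "real (Dd r a d) \<noteq> 0" using Dpos by simp
    have G: "GG (real (Dd r a d)) r c = (\<Prod>l=1..r-1. c / real (Dd r a d) + real l) / (real (Dd r a d) * fact (r - 1))" for c
      using GG_closed[OF Dn, of "r - 1" c] rS by simp
    have "polypart r a d x = (\<Sum>\<epsilon>\<in>PiE {..<r} (\<lambda>_. {0,1::nat}).
     \<Sum>j\<in>PiE {..<r} (\<lambda>i. {0..<Dd r a d div (d * a i)}).
        GG (real (Dd r a d)) r (x - real (\<Sum>i<r. a i * (d * j i + \<epsilon> i))))"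
      by (rule polypart_eq[OF Dpos DM])
    also have "\<dots> = (\<Sum>\<epsilon>\<in>PiE {..<r} (\<lambda>_. {0,1::nat}).
     \<Sum>j\<in>PiE {..<r} (\<lambda>i. {0..<Dd r a d div (d * a i)}).
        (\<Prod>l=1..r-1. (x - real (\<Sum>i<r. a i * (d * j i + \<epsilon> i))) / real (Dd r a d) + real l)
          / (real (Dd r a d) * fact (r - 1)))"
      by (simp only: G)
    finally show ?thesis by (simp add: sum_divide_distrib)
  qed
  show ?thesis using P1 P2 by blast
qed

end
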